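(* Let $\Phi=(V,C)$ be a $k$-uniform CNF formula in which each variable belongs to at most $d$ clauses, and suppose $2^k\ge2\mathrm{e}dk$. For $S\subseteq C$ let $Z_S$ be the number of assignments $X\in\{0,1\}^V$ such that every clause in $S$ is not satisfied by $X$ and every clause in $C\setminus S$ is satisfied by $X$. Then for every $S\subseteq C$, $Z_S\le 2^{|S|}Z_\emptyset$.
   Context: A CNF formula is $k$-uniform if every clause contains exactly $k$ literals on distinct variables (never both $x$ and $\neg x$). *)

theory Defs
  imports Complex_Main "HOL-Library.FuncSet"
begin

text \<open>A literal is a pair (variable, polarity): (x, True) is x, (x, False) is not x.
  A CNF formula with variable set V and clause set C is given by a clause
  index set C and a map lits assigning each clause its set of literals.\<close>

definition var_set :: "('v \<times> bool) set \<Rightarrow> 'v set" where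
  "var_set L = fst ` L"

definition clause_sat :: "('v \<Rightarrow> bool) \<Rightarrow> ('v \<times> bool) set \<Rightarrow> bool" where
  "clause_sat X L \<longleftrightarrow> (\<exists>(x, b) \<in> L. X x = b)"

definition k_uniform_cnf :: "'v set \<Rightarrow> 'c set \<Rightarrow> ('c \<Rightarrow> ('v \<times> bool) set) \<Rightarrow> nat \<Rightarrow> bool" where
  "k_uniform_cnf V C lits k \<longleftrightarrow> finite V \<and> finite C \<and>
     (\<forall>c\<in>C. finite (lits c) \<and> var_set (lits c) \<subseteq> V \<and>
              card (lits c) = k \<and> card (var_set (lits c)) = k)"

definition max_occ_le :: "'v set \<Rightarrow> 'c set \<Rightarrow> ('c \<Rightarrow> ('v \<times> bool) set) \<Rightarrow> nat \<Rightarrow> bool" where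
  "max_occ_le V C lits d \<longleftrightarrow> (\<forall>v\<in>V. card {c\<in>C. v \<in> var_set (lits c)} \<le> d)"

definition Z :: "'v set \<Rightarrow> 'c set \<Rightarrow> ('c \<Rightarrow> ('v \<times> bool) set) \<Rightarrow> 'c set \<Rightarrow> nat" where
  "Z V C lits S = card {X \<in> V \<rightarrow>\<^sub>E (UNIV :: bool set).
      (\<forall>c\<in>S. \<not> clause_sat X (lits c)) \<and> (\<forall>c\<in>C - S. clause_sat X (lits c))}"

end

theory Submission
  imports Defs
begin

definition satT :: "('c \<Rightarrow> ('v \<times> bool) set) \<Rightarrow> 'c set \<Rightarrow> ('v \<Rightarrow> bool) \<Rightarrow> bool" where
  "satT lits T X \<longleftrightarrow> (\<forall>t\<in>T. clause_sat X (lits t))"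

definition agree :: "('v \<Rightarrow> bool) \<Rightarrow> 'v set \<Rightarrow> ('v \<Rightarrow> bool) \<Rightarrow> bool" where
  "agree \<sigma> W X \<longleftrightarrow> (\<forall>v\<in>W. X v = \<sigma> v)"

lemma clause_sat_upd:
  assumes "v \<notin> var_set L"
  shows "clause_sat (X(v:=b)) L = clause_sat X L"
proof -
  have h: "\<forall>p\<in>L. fst p \<noteq> v" using assms unfolding var_set_def by auto
  have e: "\<And>Y. clause_sat Y L = (\<exists>p\<in>L. Y (fst p) = snd p)"
    unfolding clause_sat_def by (simp add: split_beta)
  have "\<And>p. p \<in> L \<Longrightarrow> (X(v:=b)) (fst p) = X (fst p)" using h by auto
  then show ?thesis unfolding e by (metis (no_types, lifting))
qed

locale lllctx =
  fixes V :: "'v set" and C :: "'c set" and lits :: "'c \<Rightarrow> ('v \<times> bool) set"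
    and k d :: nat
  assumes unif: "k_uniform_cnf V C lits k"
    and occ: "max_occ_le V C lits d"
    and kd: "real (4 * d * k) \<le> 2 ^ k"
    and dpos: "d \<ge> 1" and kpos: "k \<ge> 1"
begin

definition Om :: "('v \<Rightarrow> bool) set" where "Om = V \<rightarrow>\<^sub>E (UNIV :: bool set)"

definition N :: "'c set \<Rightarrow> nat" where "N T = card {X\<in>Om. satT lits T X}"

definition x :: real where "x = 1 / (2 * real d * real k)"

lemma finV: "finite V" and finC: "finite C" using unif unfolding k_uniform_cnf_def by auto

lemma finOm: "finite Om" unfolding Om_def using finV by (simp add: finite_PiE)

lemma dk1: "1 \<le> real d * real k"
proof -
  have "1 \<le> d * k" using dpos kpos by (metis One_nat_def Suc_le_eq nat_0_less_mult_iff)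
  then show ?thesis by (metis of_nat_1 of_nat_le_iff of_nat_mult)
qed

lemma x_pos: "0 < x" and x_le: "x \<le> 1/2"
  using dk1 unfolding x_def by (auto simp: field_simps)

lemma flip_Om: "X \<in> Om \<Longrightarrow> v \<in> V \<Longrightarrow> X(v := b) \<in> Om"
  unfolding Om_def by (auto simp: PiE_iff extensional_def)

lemma indep:
  assumes "finite W" "W \<subseteq> V" "\<forall>t\<in>T. var_set (lits t) \<inter> W = {}"
  shows "card {X\<in>Om. satT lits T X \<and> agree \<sigma> W X} * 2 ^ card W = N T"
  using assms
proof (induction W rule: finite_induct)
  case empty
  then show ?case by (simp add: N_def agree_def)
next
  case (insert v W)
  define A1 where "A1 = {X\<in>Om. satT lits T X \<and> agree \<sigma> (insert v W) X}"
  define A2 where "A2 = {X\<in>Om. satT lits T X \<and> agree \<sigma> W X \<and> X v \<noteq> \<sigma> v}"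
  define A where "A = {X\<in>Om. satT lits T X \<and> agree \<sigma> W X}"
  have vV: "v \<in> V" using insert by auto
  have nv: "\<And>t. t \<in> T \<Longrightarrow> v \<notin> var_set (lits t)" using insert.prems by auto
  have satf: "\<And>X b. satT lits T (X(v:=b)) = satT lits T X"
    unfolding satT_def by (simp add: clause_sat_upd nv)
  have agf: "\<And>X b. agree \<sigma> W (X(v:=b)) = agree \<sigma> W X"
    unfolding agree_def using insert.hyps(2) by auto
  have agi: "\<And>X. agree \<sigma> (insert v W) X = (agree \<sigma> W X \<and> X v = \<sigma> v)"
    unfolding agree_def by auto
  have AU: "A = A1 \<union> A2" unfolding A_def A1_def A2_def agree_def by auto
  have disj: "A1 \<inter> A2 = {}" unfolding A1_def A2_def agree_def by auto
  have fin: "finite A1" "finite A2" unfolding A1_def A2_def using finOm by auto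
  define f where "f = (\<lambda>X::'v\<Rightarrow>bool. X(v := \<not> X v))"
  have "bij_betw f A1 A2"
  proof (rule bij_betw_byWitness[where f'=f])
    show "\<forall>a\<in>A1. f (f a) = a" unfolding f_def by auto
    show "\<forall>a\<in>A2. f (f a) = a" unfolding f_def by auto
    show "f ` A1 \<subseteq> A2"
      unfolding A1_def A2_def f_def using flip_Om[OF _ vV] satf agf agi by auto
    show "f ` A2 \<subseteq> A1"
      unfolding A1_def A2_def f_def using flip_Om[OF _ vV] satf agf agi by auto
  qed
  then have "card A1 = card A2" by (rule bij_betw_same_card)
  then have "card A = 2 * card A1" using AU disj fin card_Un_disjoint by (metis mult_2)
  moreover have "card A * 2 ^ card W = N T" using insert unfolding A_def by auto
  ultimately show ?case using insert.hyps unfolding A1_def by (simp add: mult.commute mult.left_commute)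
qed

lemma card_touch:
  assumes "W \<subseteq> V" "T \<subseteq> C"
  shows "card {t\<in>T. var_set (lits t) \<inter> W \<noteq> {}} \<le> d * card W"
proof -
  have fW: "finite W" using assms finV finite_subset by auto
  have "{t\<in>T. var_set (lits t) \<inter> W \<noteq> {}} \<subseteq> (\<Union>v\<in>W. {c\<in>C. v \<in> var_set (lits c)})"
    using assms by auto
  then have "card {t\<in>T. var_set (lits t) \<inter> W \<noteq> {}} \<le> card (\<Union>v\<in>W. {c\<in>C. v \<in> var_set (lits c)})"
    using fW finC by (intro card_mono) auto
  also have "\<dots> \<le> (\<Sum>v\<in>W. card {c\<in>C. v \<in> var_set (lits c)})" using fW by (rule card_UN_le)
  also have "\<dots> \<le> (\<Sum>v\<in>W. d)"
    using occ assms unfolding max_occ_le_def by (intro sum_mono) auto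
  finally show ?thesis by (simp add: mult.commute)
qed

definition anti :: "'c \<Rightarrow> 'v \<Rightarrow> bool" where "anti t v = ((v, False) \<in> lits t)"

lemma viol_agree:
  assumes "t \<in> C"
  shows "(\<not> clause_sat X (lits t)) = agree (anti t) (var_set (lits t)) X"
proof -
  have "inj_on fst (lits t)"
    using unif assms unfolding k_uniform_cnf_def var_set_def by (auto intro: eq_card_imp_inj_on)
  then have u: "\<And>v. (v, True) \<in> lits t \<Longrightarrow> (v, False) \<notin> lits t"
    by (metis (no_types, lifting) fst_conv inj_on_eq_iff snd_conv)
  show ?thesis
  proof
    assume h: "\<not> clause_sat X (lits t)"
    show "agree (anti t) (var_set (lits t)) X"
      unfolding agree_def anti_def var_set_def
    proof
      fix v assume "v \<in> fst ` lits t"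
      then obtain b where vb: "(v, b) \<in> lits t" by force
      then have "X v \<noteq> b" using h unfolding clause_sat_def by auto
      then show "X v = ((v, False) \<in> lits t)" using vb u by (cases b) auto
    qed
  next
    assume h: "agree (anti t) (var_set (lits t)) X"
    show "\<not> clause_sat X (lits t)"
      unfolding clause_sat_def
    proof
      assume "\<exists>(v, b)\<in>lits t. X v = b"
      then obtain v b where vb: "(v, b) \<in> lits t" "X v = b" by auto
      have "v \<in> var_set (lits t)" using vb unfolding var_set_def by force
      then have "X v = ((v, False) \<in> lits t)" using h unfolding agree_def anti_def by auto
      then show False using vb u by (cases b) auto
    qed
  qed
qed

lemma pow_half:
  assumes "m \<le> d * k"
  shows "(1 - x) ^ m \<ge> 1/2"
proof -
  have "(1 - x) ^ (d * k) \<le> (1 - x) ^ m"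
    using assms x_pos x_le by (intro power_decreasing) auto
  moreover have "1 + real (d * k) * (- x) \<le> (1 + (- x)) ^ (d * k)"
    using x_le by (intro Bernoulli_inequality) auto
  moreover have "real (d * k) * x = 1/2" using dpos kpos unfolding x_def by auto
  ultimately show ?thesis by auto
qed

definition G :: "'c set \<Rightarrow> bool" where
  "G T \<longleftrightarrow> (\<forall>W \<sigma>. W \<subseteq> V \<longrightarrow>
     real (card {X\<in>Om. satT lits T X \<and> agree \<sigma> W X}) * 2 ^ card W
       * (1 - x) ^ card {t\<in>T. var_set (lits t) \<inter> W \<noteq> {}} \<le> real (N T))"

lemma good_from_G:
  assumes "T \<subseteq> C" "t \<in> C" "t \<notin> T" "G T"
  shows "(1 - x) * real (N T) \<le> real (N (insert t T))"
proof -
  define Wt where "Wt = var_set (lits t)"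
  define B where "B = card {X\<in>Om. satT lits T X \<and> \<not> clause_sat X (lits t)}"
  have WtV: "Wt \<subseteq> V" and cWt: "card Wt = k"
    using unif assms unfolding k_uniform_cnf_def Wt_def by auto
  have Beq: "B = card {X\<in>Om. satT lits T X \<and> agree (anti t) Wt X}"
    unfolding B_def Wt_def using viol_agree[OF assms(2)] by simp
  define P where "P = {X\<in>Om. satT lits (insert t T) X}"
  define Q where "Q = {X\<in>Om. satT lits T X \<and> \<not> clause_sat X (lits t)}"
  have PQ: "{X\<in>Om. satT lits T X} = P \<union> Q"
    unfolding P_def Q_def satT_def by auto
  have "card (P \<union> Q) = card P + card Q"
    by (rule card_Un_disjoint) (use finOm in \<open>auto simp: P_def Q_def satT_def\<close>)
  then have NT: "N T = N (insert t T) + B"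
    unfolding N_def using PQ by (simp add: P_def Q_def B_def)
  have m: "card {s\<in>T. var_set (lits s) \<inter> Wt \<noteq> {}} \<le> d * k"
    using card_touch[OF WtV assms(1)] cWt by simp
  have g: "real (card {X\<in>Om. satT lits T X \<and> agree (anti t) Wt X}) * 2 ^ card Wt
       * (1 - x) ^ card {s\<in>T. var_set (lits s) \<inter> Wt \<noteq> {}} \<le> real (N T)"
    using assms(4) WtV unfolding G_def by blast
  have "real B * 2 ^ k * (1 - x) ^ card {s\<in>T. var_set (lits s) \<inter> Wt \<noteq> {}} \<le> real (N T)"
    using g unfolding Beq[symmetric] cWt .
  moreover have "real B * 2 ^ k * (1/2) \<le> real B * 2 ^ k * (1 - x) ^ card {s\<in>T. var_set (lits s) \<inter> Wt \<noteq> {}}"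
    using pow_half[OF m] by (intro mult_left_mono) auto
  ultimately have h: "real B * 2 ^ k * (1/2) \<le> real (N T)" by linarith
  have "2 * real d * real k \<le> 2 ^ k * (1/2)" using kd by simp
  then have "real B * (2 * real d * real k) \<le> real B * (2 ^ k * (1/2))"
    by (intro mult_left_mono) auto
  then have "real B * (2 * real d * real k) \<le> real B * 2 ^ k * (1/2)"
    by (simp add: mult.assoc)
  with h have "real B * (2 * real d * real k) \<le> real (N T)" by linarith
  then have "real B \<le> x * real (N T)"
    using dk1 unfolding x_def by (simp add: field_simps)
  then show ?thesis using NT by (simp add: algebra_simps)
qed

lemma chain:
  assumes "finite R" "A \<subseteq> C" "R \<subseteq> C" "A \<inter> R = {}"
    and "\<forall>T'. A \<subseteq> T' \<and> T' \<subset> A \<union> R \<longrightarrow> (\<forall>t\<in>C - T'. (1 - x) * real (N T') \<le> real (N (insert t T')))"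
  shows "real (N A) * (1 - x) ^ card R \<le> real (N (A \<union> R))"
  using assms
proof (induction R rule: finite_induct)
  case empty
  then show ?case by simp
next
  case (insert t R)
  have IH: "real (N A) * (1 - x) ^ card R \<le> real (N (A \<union> R))"
  proof (rule insert.IH)
    show "A \<subseteq> C" "R \<subseteq> C" "A \<inter> R = {}" using insert.prems by auto
    show "\<forall>T'. A \<subseteq> T' \<and> T' \<subset> A \<union> R \<longrightarrow> (\<forall>t\<in>C - T'. (1 - x) * real (N T') \<le> real (N (insert t T')))"
    proof (intro allI impI)
      fix T' assume "A \<subseteq> T' \<and> T' \<subset> A \<union> R"
      then have "A \<subseteq> T' \<and> T' \<subset> A \<union> insert t R" by auto
      then show "\<forall>t\<in>C - T'. (1 - x) * real (N T') \<le> real (N (insert t T'))"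
        using insert.prems(4) by blast
    qed
  qed
  have "(1 - x) * real (N (A \<union> R)) \<le> real (N (insert t (A \<union> R)))"
  proof (rule insert.prems(4)[rule_format])
    show "A \<subseteq> A \<union> R \<and> A \<union> R \<subset> A \<union> insert t R"
      using insert.hyps insert.prems(3) by auto
    show "t \<in> C - (A \<union> R)" using insert.hyps insert.prems(2,3) by auto
  qed
  moreover have "(1 - x) * (real (N A) * (1 - x) ^ card R) \<le> (1 - x) * real (N (A \<union> R))"
    using IH x_le by (intro mult_left_mono) auto
  ultimately show ?case using insert.hyps by (simp add: algebra_simps)
qed

lemma G_all: "T \<subseteq> C \<Longrightarrow> G T"
proof (induction "card T" arbitrary: T rule: less_induct)
  case less
  show ?case unfolding G_def
  proof (intro allI impI)
    fix W \<sigma> assume WV: "W \<subseteq> V"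
    have fW: "finite W" using WV finV finite_subset by auto
    define T1 where "T1 = {t\<in>T. var_set (lits t) \<inter> W \<noteq> {}}"
    define T2 where "T2 = T - T1"
    have fT: "finite T" using less.prems finC finite_subset by auto
    have sub: "{X\<in>Om. satT lits T X \<and> agree \<sigma> W X} \<subseteq> {X\<in>Om. satT lits T2 X \<and> agree \<sigma> W X}"
    proof -
      have "T2 \<subseteq> T" unfolding T2_def by auto
      then show ?thesis unfolding satT_def by blast
    qed
    have c1: "card {X\<in>Om. satT lits T X \<and> agree \<sigma> W X} \<le> card {X\<in>Om. satT lits T2 X \<and> agree \<sigma> W X}"
      using finOm by (intro card_mono[OF _ sub]) auto
    have c2: "card {X\<in>Om. satT lits T2 X \<and> agree \<sigma> W X} * 2 ^ card W = N T2"
    proof (rule indep[OF fW WV])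
      show "\<forall>t\<in>T2. var_set (lits t) \<inter> W = {}" unfolding T2_def T1_def by blast
    qed
    have TT: "T2 \<union> T1 = T" unfolding T1_def T2_def by auto
    have ch: "real (N T2) * (1 - x) ^ card T1 \<le> real (N T)"
    proof -
      have "real (N T2) * (1 - x) ^ card T1 \<le> real (N (T2 \<union> T1))"
      proof (rule chain)
        show "finite T1" using fT unfolding T1_def by auto
        show "T2 \<subseteq> C" "T1 \<subseteq> C" using less.prems unfolding T1_def T2_def by auto
        show "T2 \<inter> T1 = {}" unfolding T2_def by auto
        show "\<forall>T'. T2 \<subseteq> T' \<and> T' \<subset> T2 \<union> T1 \<longrightarrow> (\<forall>t\<in>C - T'. (1 - x) * real (N T') \<le> real (N (insert t T')))"
        proof (intro allI impI ballI)
          fix T' t assume a: "T2 \<subseteq> T' \<and> T' \<subset> T2 \<union> T1" and t: "t \<in> C - T'"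
          have "T' \<subset> T" using a TT by auto
          then have "card T' < card T" using fT psubset_card_mono by auto
          moreover have "T' \<subseteq> C" using \<open>T' \<subset> T\<close> less.prems by auto
          ultimately have gT: "G T'" using less.hyps by blast
          have tC: "t \<in> C" "t \<notin> T'" using t by auto
          show "(1 - x) * real (N T') \<le> real (N (insert t T'))"
            by (rule good_from_G[OF \<open>T' \<subseteq> C\<close> tC gT])
        qed
      qed
      then show ?thesis using TT by simp
    qed
    have p: "0 \<le> (1 - x) ^ card T1" using x_le by auto
    have "real (card {X\<in>Om. satT lits T X \<and> agree \<sigma> W X}) * 2 ^ card W * (1 - x) ^ card T1
        \<le> real (card {X\<in>Om. satT lits T2 X \<and> agree \<sigma> W X}) * 2 ^ card W * (1 - x) ^ card T1"
      using c1 p by (intro mult_right_mono) auto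
    also have "\<dots> = real (N T2) * (1 - x) ^ card T1"
    proof -
      have "real (card {X\<in>Om. satT lits T2 X \<and> agree \<sigma> W X} * 2 ^ card W) = real (N T2)"
        using c2 by (rule arg_cong)
      then show ?thesis by simp
    qed
    also have "\<dots> \<le> real (N T)" by (rule ch)
    finally show "real (card {X\<in>Om. satT lits T X \<and> agree \<sigma> W X}) * 2 ^ card W
       * (1 - x) ^ card {t\<in>T. var_set (lits t) \<inter> W \<noteq> {}} \<le> real (N T)"
      unfolding T1_def .
  qed
qed

lemma all_good: "T' \<subseteq> C \<Longrightarrow> t \<in> C - T' \<Longrightarrow> (1 - x) * real (N T') \<le> real (N (insert t T'))"
  using good_from_G G_all by auto

lemma main:
  assumes SC: "S \<subseteq> C"
  shows "Z V C lits S \<le> 2 ^ card S * Z V C lits {}"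
proof -
  define ZS where "ZS = {X\<in>Om. (\<forall>c\<in>S. \<not> clause_sat X (lits c)) \<and> (\<forall>c\<in>C - S. clause_sat X (lits c))}"
  have Zeq: "Z V C lits S = card ZS" unfolding Z_def ZS_def Om_def by simp
  have Z0: "Z V C lits {} = N C" unfolding Z_def N_def Om_def satT_def Diff_empty by (simp only: ball_empty simp_thms)
  show ?thesis
  proof (cases "ZS = {}")
    case True
    then show ?thesis using Zeq by simp
  next
    case False
    then obtain X0 where X0: "X0 \<in> ZS" by auto
    define U where "U = (\<Union>c\<in>S. var_set (lits c))"
    have UV: "U \<subseteq> V" using unif SC unfolding U_def k_uniform_cnf_def by auto
    have fU: "finite U" using UV finV finite_subset by auto
    have sub: "ZS \<subseteq> {X\<in>Om. satT lits (C - S) X \<and> agree X0 U X}"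
    proof
      fix X assume X: "X \<in> ZS"
      have "agree X0 U X" unfolding agree_def
      proof
        fix v assume "v \<in> U"
        then obtain c where c: "c \<in> S" "v \<in> var_set (lits c)" unfolding U_def by auto
        have cC: "c \<in> C" using c SC by auto
        have "agree (anti c) (var_set (lits c)) X" "agree (anti c) (var_set (lits c)) X0"
          using X X0 c viol_agree[OF cC] unfolding ZS_def by auto
        then show "X v = X0 v" using c unfolding agree_def by auto
      qed
      then show "X \<in> {X\<in>Om. satT lits (C - S) X \<and> agree X0 U X}"
        using X unfolding ZS_def satT_def by auto
    qed
    have c1: "card ZS \<le> card {X\<in>Om. satT lits (C - S) X \<and> agree X0 U X}"
      using finOm by (intro card_mono[OF _ sub]) auto
    define T1 where "T1 = {t\<in>C - S. var_set (lits t) \<inter> U \<noteq> {}}"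
    have g: "real (card {X\<in>Om. satT lits (C - S) X \<and> agree X0 U X}) * 2 ^ card U
       * (1 - x) ^ card T1 \<le> real (N (C - S))"
      using G_all[of "C - S"] UV unfolding G_def T1_def by blast
    have fS: "finite S" using SC finC finite_subset by auto
    have ch: "real (N (C - S)) * (1 - x) ^ card S \<le> real (N ((C - S) \<union> S))"
    proof (rule chain)
      show "finite S" "C - S \<subseteq> C" "S \<subseteq> C" "(C - S) \<inter> S = {}" using fS SC by auto
      show "\<forall>T'. C - S \<subseteq> T' \<and> T' \<subset> C - S \<union> S \<longrightarrow> (\<forall>t\<in>C - T'. (1 - x) * real (N T') \<le> real (N (insert t T')))"
      proof (intro allI impI ballI)
        fix T' t assume a: "C - S \<subseteq> T' \<and> T' \<subset> C - S \<union> S" and t: "t \<in> C - T'"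
        have "T' \<subseteq> C" using a SC by auto
        then show "(1 - x) * real (N T') \<le> real (N (insert t T'))" using all_good t by blast
      qed
    qed
    have CS: "(C - S) \<union> S = C" using SC by auto
    have T1b: "card T1 \<le> d * card U" unfolding T1_def using card_touch[OF UV, of "C - S"] by auto
    have hd: "(1 - x) ^ d \<ge> 1/2" using pow_half[of d] kpos by auto
    have "(1 - x) ^ (d * card U) \<le> (1 - x) ^ card T1"
      using T1b x_pos x_le by (intro power_decreasing) auto
    moreover have "(1/2) ^ card U \<le> ((1 - x) ^ d) ^ card U"
      using hd by (intro power_mono) auto
    ultimately have "(1/2) ^ card U \<le> (1 - x) ^ card T1" by (simp add: power_mult)
    then have "(2::real) ^ card U * (1/2) ^ card U \<le> 2 ^ card U * (1 - x) ^ card T1"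
      by (intro mult_left_mono) auto
    then have e1: "1 \<le> (2::real) ^ card U * (1 - x) ^ card T1"
      by (simp add: power_mult_distrib[symmetric])
    have e2: "(1/2) ^ card S \<le> (1 - x) ^ card S"
      using x_le by (intro power_mono) auto
    have p1: "0 \<le> (1 - x) ^ card S" using x_le by auto
    have "real (card ZS) * (1/2) ^ card S \<le> real (card ZS) * (1 - x) ^ card S"
      using e2 by (intro mult_left_mono) auto
    also have "\<dots> \<le> real (card ZS) * 2 ^ card U * (1 - x) ^ card T1 * (1 - x) ^ card S"
    proof -
      have "real (card ZS) * 1 \<le> real (card ZS) * (2 ^ card U * (1 - x) ^ card T1)"
        using e1 by (intro mult_left_mono) auto
      then have q: "real (card ZS) \<le> real (card ZS) * 2 ^ card U * (1 - x) ^ card T1"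
        by (simp add: mult.assoc)
      show ?thesis using q p1 by (rule mult_right_mono)
    qed
    also have "\<dots> \<le> real (card {X\<in>Om. satT lits (C - S) X \<and> agree X0 U X}) * 2 ^ card U
       * (1 - x) ^ card T1 * (1 - x) ^ card S"
    proof -
      have a: "real (card ZS) * 2 ^ card U \<le> real (card {X\<in>Om. satT lits (C - S) X \<and> agree X0 U X}) * 2 ^ card U"
        using c1 by (intro mult_right_mono) auto
      have b: "0 \<le> (1 - x) ^ card T1" using x_le by simp
      show ?thesis using mult_right_mono[OF mult_right_mono[OF a b] p1] .
    qed
    also have "\<dots> \<le> real (N (C - S)) * (1 - x) ^ card S"
      using g p1 by (intro mult_right_mono) auto
    also have "\<dots> \<le> real (N C)" using ch CS by simp
    finally have "real (card ZS) * (1/2) ^ card S \<le> real (N C)" .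
    then have h2: "2 ^ card S * (real (card ZS) * (1/2) ^ card S) \<le> 2 ^ card S * real (N C)"
      by (intro mult_left_mono) auto
    have h1: "(2::real) ^ card S * (1/2) ^ card S = 1" by (simp add: power_mult_distrib[symmetric])
    have "2 ^ card S * (real (card ZS) * (1/2) ^ card S) = real (card ZS) * (2 ^ card S * (1/2) ^ card S)"
      by (simp only: ac_simps)
    then have eq: "2 ^ card S * (real (card ZS) * (1/2) ^ card S) = real (card ZS)"
      using h1 by (simp only: mult_1_right)
    have "real (card ZS) \<le> 2 ^ card S * real (N C)" using h2 unfolding eq .
    then have "real (card ZS) \<le> real (2 ^ card S * N C)" by simp
    then show ?thesis using Zeq Z0 by (simp only: of_nat_le_iff)
  qed
qed

end

theorem lemma7p7:
  fixes V :: "'v set" and C :: "'c set" and lits :: "'c \<Rightarrow> ('v \<times> bool) set"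
    and k d :: nat and S :: "'c set"
  assumes "k_uniform_cnf V C lits k"
    and "max_occ_le V C lits d"
    and "(2::real) ^ k \<ge> 2 * exp 1 * real d * real k"
    and "k \<ge> 1"
    and "S \<subseteq> C"
  shows "Z V C lits S \<le> 2 ^ card S * Z V C lits {}"
proof (cases "S = {}")
  case True
  then show ?thesis by simp
next
  case False
  then obtain c where c: "c \<in> C" using assms(5) by auto
  have cv: "card (var_set (lits c)) = k" and cvV: "var_set (lits c) \<subseteq> V" and fC: "finite C"
    using assms(1) c unfolding k_uniform_cnf_def by auto
  then obtain v where v: "v \<in> var_set (lits c)" using assms(4)
    by (metis card.empty ex_in_conv not_one_le_zero)
  have fin1: "finite {t\<in>C. v \<in> var_set (lits t)}" using fC by auto
  have mem1: "c \<in> {t\<in>C. v \<in> var_set (lits t)}" using c v by auto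
  have "0 < card {t\<in>C. v \<in> var_set (lits t)}"
    using fin1 mem1 card_gt_0_iff by blast
  then have "1 \<le> card {t\<in>C. v \<in> var_set (lits t)}" by simp
  also have "\<dots> \<le> d" using assms(2) v cvV unfolding max_occ_le_def by auto
  finally have d1: "d \<ge> 1" .
  have "2 * 2 * real d * real k \<le> 2 * exp 1 * real d * real k"
    using exp_ge_add_one_self[of 1] by (intro mult_right_mono) auto
  then have "4 * real d * real k \<le> 2 ^ k" using assms(3) by linarith
  then have kd: "real (4 * d * k) \<le> 2 ^ k" by simp
  interpret L: lllctx V C lits k d
    using assms(1,2,4) kd d1 by unfold_locales auto
  show ?thesis using L.main assms(5) .
qed

end
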